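(* Let $\vec{\mathcal{X}}=(\mathcal{X}_0,\mathcal{X}_1)$ be a couple of rotation invariant pseudolattices and let $\vec B=(B_0,B_1)$ be a complex Banach couple. Then for every $s\in\mathbb{A}$: (i) if $f\in\mathcal{F}_{\vec{\mathcal{X}}}(\vec B)$, then $f(s)\in\vec B_{\vec{\mathcal{X}},|s|}$; (ii) if $x\in\vec B_{\vec{\mathcal{X}},|s|}$, then there exists $f\in\mathcal{F}_{\vec{\mathcal{X}}}(\vec B)$ with $f(s)=x$; (iii) $\vec B_{\vec{\mathcal{X}},s}=\vec B_{\vec{\mathcal{X}},|s|}$ with equality of norms.
   Context: A pseudolattice $\mathcal{X}$ assigns to every complex Banach space $B$ a Banach space $\mathcal{X}(B)$ of two-sided sequences $\{b_n\}_{n\in\mathbb{Z}}$ in $B$ such that: if $A$ is a closed subspace of $B$ then $\mathcal{X}(A)$ is a closed subspace of $\mathcal{X}(B)$; there is $C=C(\mathcal X)>0$ with $\|\{Ta_n\}\|_{\mathcal{X}(B)}\le C\|T\|_{A\to B}\|\{a_n\}\|_{\mathcal{X}(A)}$ for all bounded linear $T:A\to B$ and $\{a_n\}\in\mathcal X(A)$; and $\|b_m\|_B\le\|\{b_n\}\|_{\mathcal{X}(B)}$ for all $m$. A couple $(\mathcal X_0,\mathcal X_1)$ is rotation invariant if for every real $\tau$ and every Banach space $B$ the map $\{b_n\}\mapsto\{e^{in\tau}b_n\}$ is an isometry of $\mathcal X_j(B)$ onto itself, $j=0,1$. For a Banach couple $\vec B=(B_0,B_1)$, $\mathcal{J}(\vec{\mathcal{X}},\vec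 B)$ is the Banach space of sequences $\{b_n\}_{n\in\mathbb Z}\subset B_0\cap B_1$ with $\{b_n\}\in\mathcal{X}_0(B_0)$ and $\{e^nb_n\}\in\mathcal{X}_1(B_1)$, normed by $\max\{\|\{b_n\}\|_{\mathcal{X}_0(B_0)},\|\{e^nb_n\}\|_{\mathcal{X}_1(B_1)}\}$. Let $\mathbb{A}=\{z\in\mathbb{C}:1<|z|<e\}$. For $s\in\mathbb{A}$, $\vec B_{\vec{\mathcal{X}},s}$ is the space of all $b=\sum_{n\in\mathbb Z}s^nb_n$ (convergence in $B_0+B_1$) with $\{b_n\}\in\mathcal{J}(\vec{\mathcal{X}},\vec B)$, normed by the infimum of $\|\{b_n\}\|_{\mathcal J(\vec{\mathcal X},\vec B)}$ over all such representations. $\mathcal{F}_{\vec{\mathcal{X}}}(\vec B)$ denotes the Banach space of analytic functions $f:\mathbb{A}\to B_0+B_1$ of the form $f(z)=\sum_{n\in\mathbb Z}z^nb_n$ with $\{b_n\}\in\mathcal{J}(\vec{\mathcal{X}},\vec B)$, normed by $\|f\|=\|\{b_n\}\|_{\mathcal{J}(\vec{\mathcal{X}},\vec B)}$. *)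

theory Defs
  imports "HOL-Analysis.Analysis"
begin

class cnormed = real_normed_vector +
  fixes scaleCx :: "complex \<Rightarrow> 'a \<Rightarrow> 'a"
  assumes scaleCx_add_right: "scaleCx a (x + y) = scaleCx a x + scaleCx a y"
    and scaleCx_add_left: "scaleCx (a + b) x = scaleCx a x + scaleCx b x"
    and scaleCx_scaleCx: "scaleCx a (scaleCx b x) = scaleCx (a * b) x"
    and scaleCx_of_real: "scaleCx (complex_of_real r) x = scaleR r x"
    and norm_scaleCx: "norm (scaleCx a x) = cmod a * norm x"

text \<open>A complex Banach space is given by a carrier set S inside an ambient type,
  with explicitly given zero, addition and complex scalar multiplication, and a
  norm function N (only its values on S matter).\<close>

definition is_cbanach ::
  "'w \<Rightarrow> ('w \<Rightarrow> 'w \<Rightarrow> 'w) \<Rightarrow> (complex \<Rightarrow> 'w \<Rightarrow> 'w) \<Rightarrow> 'w set \<Rightarrow> ('w \<Rightarrow> real) \<Rightarrow> bool"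
where
  "is_cbanach z pl sc S N \<longleftrightarrow>
     z \<in> S \<and>
     (\<forall>x\<in>S. \<forall>y\<in>S. pl x y \<in> S) \<and>
     (\<forall>a. \<forall>x\<in>S. sc a x \<in> S) \<and>
     (\<forall>x\<in>S. 0 \<le> N x \<and> (N x = 0 \<longleftrightarrow> x = z)) \<and>
     (\<forall>a. \<forall>x\<in>S. N (sc a x) = cmod a * N x) \<and>
     (\<forall>x\<in>S. \<forall>y\<in>S. N (pl x y) \<le> N x + N y) \<and>
     (\<forall>f :: nat \<Rightarrow> 'w. (\<forall>k. f k \<in> S) \<longrightarrow>
        (\<forall>e>0. \<exists>K. \<forall>m\<ge>K. \<forall>n\<ge>K. N (pl (f m) (sc (-1) (f n))) < e) \<longrightarrow>
        (\<exists>x\<in>S. (\<lambda>k. N (pl (f k) (sc (-1) x))) \<longlonglongrightarrow> 0))"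

definition banach_sp :: "'v::cnormed set \<Rightarrow> ('v \<Rightarrow> real) \<Rightarrow> bool" where
  "banach_sp S N \<longleftrightarrow> is_cbanach 0 (+) scaleCx S N"

definition seq_banach_sp :: "(int \<Rightarrow> 'v::cnormed) set \<Rightarrow> ((int \<Rightarrow> 'v) \<Rightarrow> real) \<Rightarrow> bool" where
  "seq_banach_sp S N \<longleftrightarrow>
     is_cbanach (\<lambda>n. 0) (\<lambda>x y n. x n + y n) (\<lambda>a x n. scaleCx a (x n)) S N"

definition closed_subsp :: "'w set \<Rightarrow> 'w set \<Rightarrow> ('w \<Rightarrow> 'w \<Rightarrow> 'w) \<Rightarrow> (complex \<Rightarrow> 'w \<Rightarrow> 'w)
    \<Rightarrow> ('w \<Rightarrow> real) \<Rightarrow> bool" where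
  "closed_subsp A B pl sc NB \<longleftrightarrow> A \<subseteq> B \<and>
     (\<forall>x\<in>A. \<forall>y\<in>A. pl x y \<in> A) \<and> (\<forall>a. \<forall>x\<in>A. sc a x \<in> A) \<and> A \<noteq> {} \<and>
     (\<forall>f :: nat \<Rightarrow> 'w. \<forall>x\<in>B. (\<forall>k. f k \<in> A) \<longrightarrow>
        (\<lambda>k. NB (pl (f k) (sc (-1) x))) \<longlonglongrightarrow> 0 \<longrightarrow> x \<in> A)"

text \<open>A pseudolattice is a map sending each complex Banach space (B, NB) (here: inside
  the ambient space 'v) to a Banach space of two-sided sequences in B, given as
  (carrier, norm).\<close>
type_synonym 'v pseudo = "'v set \<times> ('v \<Rightarrow> real) \<Rightarrow> (int \<Rightarrow> 'v) set \<times> ((int \<Rightarrow> 'v) \<Rightarrow> real)"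

definition bounded_lin_op ::
  "'v::cnormed set \<Rightarrow> ('v \<Rightarrow> real) \<Rightarrow> 'v set \<Rightarrow> ('v \<Rightarrow> real) \<Rightarrow> ('v \<Rightarrow> 'v) \<Rightarrow> real \<Rightarrow> bool"
where
  "bounded_lin_op A NA B NB T M \<longleftrightarrow>
     (\<forall>x\<in>A. T x \<in> B) \<and>
     (\<forall>x\<in>A. \<forall>y\<in>A. T (x + y) = T x + T y) \<and>
     (\<forall>a. \<forall>x\<in>A. T (scaleCx a x) = scaleCx a (T x)) \<and>
     (\<forall>x\<in>A. NB (T x) \<le> M * NA x)"

definition pseudolattice :: "'v::cnormed pseudo \<Rightarrow> bool" where
  "pseudolattice X \<longleftrightarrow>
     (\<forall>B NB. banach_sp B NB \<longrightarrow>
        seq_banach_sp (fst (X (B, NB))) (snd (X (B, NB))) \<and>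
        (\<forall>b\<in>fst (X (B, NB)). \<forall>m. b m \<in> B \<and> NB (b m) \<le> snd (X (B, NB)) b)) \<and>
     (\<forall>A B NB. banach_sp B NB \<longrightarrow>
        closed_subsp A B (+) scaleCx NB \<longrightarrow>
        closed_subsp (fst (X (A, NB))) (fst (X (B, NB)))
           (\<lambda>x y n. x n + y n) (\<lambda>a x n. scaleCx a (x n)) (snd (X (B, NB))) \<and>
        (\<forall>b\<in>fst (X (A, NB)). snd (X (A, NB)) b = snd (X (B, NB)) b)) \<and>
     (\<exists>C>0. \<forall>A NA B NB T M. banach_sp A NA \<longrightarrow> banach_sp B NB \<longrightarrow> 0 \<le> M \<longrightarrow>
        bounded_lin_op A NA B NB T M \<longrightarrow>
        (\<forall>a\<in>fst (X (A, NA)).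
           (\<lambda>n. T (a n)) \<in> fst (X (B, NB)) \<and>
           snd (X (B, NB)) (\<lambda>n. T (a n)) \<le> C * M * snd (X (A, NA)) a))"

definition rotation_invariant :: "'v::cnormed pseudo \<Rightarrow> bool" where
  "rotation_invariant X \<longleftrightarrow>
     (\<forall>(\<tau>::real) B NB. banach_sp B NB \<longrightarrow>
        (\<forall>b\<in>fst (X (B, NB)).
           (\<lambda>n. scaleCx (cis (of_int n * \<tau>)) (b n)) \<in> fst (X (B, NB)) \<and>
           snd (X (B, NB)) (\<lambda>n. scaleCx (cis (of_int n * \<tau>)) (b n)) = snd (X (B, NB)) b) \<and>
        (\<lambda>b n. scaleCx (cis (of_int n * \<tau>)) (b n)) ` fst (X (B, NB)) = fst (X (B, NB)))"

definition rot_inv_couple :: "'v::cnormed pseudo \<Rightarrow> 'v pseudo \<Rightarrow> bool" where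
  "rot_inv_couple X0 X1 \<longleftrightarrow> rotation_invariant X0 \<and> rotation_invariant X1"

text \<open>A (compatible) complex Banach couple: two Banach spaces continuously embedded in a
  common Hausdorff topological vector space; here the ambient space 'v is a complex
  normed vector space (B_0 + B_1 with its K-norm shows no generality is lost).\<close>
definition banach_couple :: "'v::cnormed set \<Rightarrow> ('v \<Rightarrow> real) \<Rightarrow> 'v set \<Rightarrow> ('v \<Rightarrow> real) \<Rightarrow> bool"
where
  "banach_couple B0 N0 B1 N1 \<longleftrightarrow>
     banach_sp B0 N0 \<and> banach_sp B1 N1 \<and>
     (\<exists>c. \<forall>x\<in>B0. norm x \<le> c * N0 x) \<and> (\<exists>c. \<forall>x\<in>B1. norm x \<le> c * N1 x)"

definition sum_space :: "'v::cnormed set \<Rightarrow> 'v set \<Rightarrow> 'v set" where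
  "sum_space B0 B1 = {a + b | a b. a \<in> B0 \<and> b \<in> B1}"

definition sum_norm :: "'v::cnormed set \<Rightarrow> ('v \<Rightarrow> real) \<Rightarrow> 'v set \<Rightarrow> ('v \<Rightarrow> real) \<Rightarrow> 'v \<Rightarrow> real" where
  "sum_norm B0 N0 B1 N1 x = Inf {N0 a + N1 b | a b. a \<in> B0 \<and> b \<in> B1 \<and> x = a + b}"

definition zsum_conv :: "'v::cnormed set \<Rightarrow> ('v \<Rightarrow> real) \<Rightarrow> 'v set \<Rightarrow> ('v \<Rightarrow> real)
    \<Rightarrow> (int \<Rightarrow> 'v) \<Rightarrow> 'v \<Rightarrow> bool" where
  "zsum_conv B0 N0 B1 N1 u x \<longleftrightarrow>
     x \<in> sum_space B0 B1 \<and>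
     (\<forall>e>0. \<exists>K::nat. \<forall>M\<ge>K. \<forall>N\<ge>K.
        sum_norm B0 N0 B1 N1 (x - (\<Sum>n\<in>{- int N..int M}. u n)) < e)"

definition J_space :: "'v::cnormed pseudo \<Rightarrow> 'v pseudo \<Rightarrow> 'v set \<Rightarrow> ('v \<Rightarrow> real) \<Rightarrow> 'v set
    \<Rightarrow> ('v \<Rightarrow> real) \<Rightarrow> (int \<Rightarrow> 'v) set" where
  "J_space X0 X1 B0 N0 B1 N1 =
     {b. (\<forall>n. b n \<in> B0 \<inter> B1) \<and> b \<in> fst (X0 (B0, N0)) \<and>
         (\<lambda>n. scaleCx (exp (of_int n)) (b n)) \<in> fst (X1 (B1, N1))}"

definition J_norm :: "'v::cnormed pseudo \<Rightarrow> 'v pseudo \<Rightarrow> 'v set \<Rightarrow> ('v \<Rightarrow> real) \<Rightarrow> 'v set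
    \<Rightarrow> ('v \<Rightarrow> real) \<Rightarrow> (int \<Rightarrow> 'v) \<Rightarrow> real" where
  "J_norm X0 X1 B0 N0 B1 N1 b =
     max (snd (X0 (B0, N0)) b) (snd (X1 (B1, N1)) (\<lambda>n. scaleCx (exp (of_int n)) (b n)))"

definition annulus :: "complex set" where
  "annulus = {z. 1 < cmod z \<and> cmod z < exp 1}"

definition Bs_space :: "'v::cnormed pseudo \<Rightarrow> 'v pseudo \<Rightarrow> 'v set \<Rightarrow> ('v \<Rightarrow> real) \<Rightarrow> 'v set
    \<Rightarrow> ('v \<Rightarrow> real) \<Rightarrow> complex \<Rightarrow> 'v set" where
  "Bs_space X0 X1 B0 N0 B1 N1 s =
     {x. \<exists>b\<in>J_space X0 X1 B0 N0 B1 N1. zsum_conv B0 N0 B1 N1 (\<lambda>n. scaleCx (s powi n) (b n)) x}"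

definition Bs_norm :: "'v::cnormed pseudo \<Rightarrow> 'v pseudo \<Rightarrow> 'v set \<Rightarrow> ('v \<Rightarrow> real) \<Rightarrow> 'v set
    \<Rightarrow> ('v \<Rightarrow> real) \<Rightarrow> complex \<Rightarrow> 'v \<Rightarrow> real" where
  "Bs_norm X0 X1 B0 N0 B1 N1 s x =
     Inf {J_norm X0 X1 B0 N0 B1 N1 b | b. b \<in> J_space X0 X1 B0 N0 B1 N1 \<and>
            zsum_conv B0 N0 B1 N1 (\<lambda>n. scaleCx (s powi n) (b n)) x}"

definition sum_analytic :: "'v::cnormed set \<Rightarrow> ('v \<Rightarrow> real) \<Rightarrow> 'v set \<Rightarrow> ('v \<Rightarrow> real)
    \<Rightarrow> complex set \<Rightarrow> (complex \<Rightarrow> 'v) \<Rightarrow> bool" where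
  "sum_analytic B0 N0 B1 N1 U f \<longleftrightarrow>
     (\<forall>z\<in>U. f z \<in> sum_space B0 B1) \<and>
     (\<forall>z\<in>U. \<exists>d\<in>sum_space B0 B1. \<forall>e>0. \<exists>r>0. \<forall>w\<in>U. w \<noteq> z \<and> cmod (w - z) < r \<longrightarrow>
        sum_norm B0 N0 B1 N1 (scaleCx (inverse (w - z)) (f w - f z) - d) < e)"

definition F_space :: "'v::cnormed pseudo \<Rightarrow> 'v pseudo \<Rightarrow> 'v set \<Rightarrow> ('v \<Rightarrow> real) \<Rightarrow> 'v set
    \<Rightarrow> ('v \<Rightarrow> real) \<Rightarrow> (complex \<Rightarrow> 'v) set" where
  "F_space X0 X1 B0 N0 B1 N1 =
     {f. sum_analytic B0 N0 B1 N1 annulus f \<and>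
         (\<exists>b\<in>J_space X0 X1 B0 N0 B1 N1.
            \<forall>z\<in>annulus. zsum_conv B0 N0 B1 N1 (\<lambda>n. scaleCx (z powi n) (b n)) (f z))}"

end

theory Submission
  imports Defs
begin


lemma scaleCx_zero_right[simp]: "scaleCx a (0::'v::cnormed) = 0"
proof -
  have "scaleCx a (0::'v) = scaleCx a (0 + 0)" by simp
  also have "\<dots> = scaleCx a 0 + scaleCx a 0" by (rule scaleCx_add_right)
  finally show ?thesis by simp
qed

lemma scaleCx_minus_right: "scaleCx a (- (x::'v::cnormed)) = - scaleCx a x"
proof -
  have "scaleCx a (- x) + scaleCx a x = scaleCx a (- x + x)" by (rule scaleCx_add_right[symmetric])
  also have "\<dots> = 0" by simp
  finally show ?thesis by (simp add: eq_neg_iff_add_eq_0)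
qed

lemma scaleCx_diff_right: "scaleCx a ((x::'v::cnormed) - y) = scaleCx a x - scaleCx a y"
  unfolding diff_conv_add_uminus by (simp only: scaleCx_add_right scaleCx_minus_right)

lemma scaleCx_zero_left[simp]: "scaleCx 0 (x::'v::cnormed) = 0"
  using scaleCx_of_real[of 0 x] by simp

lemma scaleCx_one[simp]: "scaleCx 1 (x::'v::cnormed) = x"
  using scaleCx_of_real[of 1 x] by simp

lemma scaleCx_m1: "scaleCx (-1) (x::'v::cnormed) = - x"
  using scaleCx_of_real[of "-1" x] by simp

lemma scaleCx_minus_left: "scaleCx (- a) (x::'v::cnormed) = - scaleCx a x"
proof -
  have "scaleCx (- a) x + scaleCx a x = scaleCx (- a + a) x" by (rule scaleCx_add_left[symmetric])
  also have "\<dots> = 0" by simp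
  finally show ?thesis by (simp add: eq_neg_iff_add_eq_0)
qed

lemma scaleCx_diff_left: "scaleCx (a - b) (x::'v::cnormed) = scaleCx a x - scaleCx b x"
  unfolding diff_conv_add_uminus by (simp only: scaleCx_add_left scaleCx_minus_left)

lemma scaleCx_sum_right: "scaleCx a (\<Sum>i\<in>I. f i) = (\<Sum>i\<in>I. scaleCx a (f i :: 'v::cnormed))"
  by (induction I rule: infinite_finite_induct) (auto simp: scaleCx_add_right)

locale bsp =
  fixes S :: "'v::cnormed set" and N :: "'v \<Rightarrow> real"
  assumes bs: "banach_sp S N"
begin

lemma zero_in: "0 \<in> S" using bs by (simp add: banach_sp_def is_cbanach_def)
lemma add_in: "x \<in> S \<Longrightarrow> y \<in> S \<Longrightarrow> x + y \<in> S" using bs by (simp add: banach_sp_def is_cbanach_def)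
lemma scale_in: "x \<in> S \<Longrightarrow> scaleCx a x \<in> S" using bs by (simp add: banach_sp_def is_cbanach_def)
lemma neg_in: "x \<in> S \<Longrightarrow> - x \<in> S" using scale_in[of x "-1"] by (simp add: scaleCx_m1)
lemma diff_in: "x \<in> S \<Longrightarrow> y \<in> S \<Longrightarrow> x - y \<in> S" unfolding diff_conv_add_uminus by (intro add_in neg_in)
lemma sum_in: "(\<And>i. i \<in> I \<Longrightarrow> f i \<in> S) \<Longrightarrow> (\<Sum>i\<in>I. f i) \<in> S"
  by (induction I rule: infinite_finite_induct) (auto simp: zero_in add_in)
lemma N_nonneg: "x \<in> S \<Longrightarrow> 0 \<le> N x" using bs by (simp add: banach_sp_def is_cbanach_def)
lemma N_zero: "x \<in> S \<Longrightarrow> N x = 0 \<longleftrightarrow> x = 0" using bs by (simp add: banach_sp_def is_cbanach_def)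
lemma N_scale: "x \<in> S \<Longrightarrow> N (scaleCx a x) = cmod a * N x" using bs by (simp add: banach_sp_def is_cbanach_def)
lemma N_tri: "x \<in> S \<Longrightarrow> y \<in> S \<Longrightarrow> N (x + y) \<le> N x + N y" using bs by (simp add: banach_sp_def is_cbanach_def)
lemma N_neg: "x \<in> S \<Longrightarrow> N (- x) = N x" using N_scale[of x "-1"] by (simp add: scaleCx_m1)
lemma N_tri_diff: assumes "x \<in> S" "y \<in> S" shows "N (x - y) \<le> N x + N y"
proof -
  have "N (x + - y) \<le> N x + N (- y)" by (rule N_tri) (use assms neg_in in auto)
  then show ?thesis using N_neg[OF assms(2)] by simp
qed
lemma N_sym: "x \<in> S \<Longrightarrow> y \<in> S \<Longrightarrow> N (x - y) = N (y - x)"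
  using N_neg[of "y - x"] diff_in[of y x] by simp
lemma N_sum: "(\<And>i. i \<in> I \<Longrightarrow> f i \<in> S) \<Longrightarrow> N (\<Sum>i\<in>I. f i) \<le> (\<Sum>i\<in>I. N (f i))"
proof (induction I rule: infinite_finite_induct)
  case (infinite A) then show ?case using N_zero[OF zero_in] by simp
next
  case empty then show ?case using N_zero[OF zero_in] by simp
next
  case (insert x F)
  have "N (\<Sum>i\<in>insert x F. f i) = N (f x + (\<Sum>i\<in>F. f i))" using insert by simp
  also have "\<dots> \<le> N (f x) + N (\<Sum>i\<in>F. f i)" using insert by (intro N_tri sum_in) auto
  also have "\<dots> \<le> N (f x) + (\<Sum>i\<in>F. N (f i))" using insert by auto
  finally show ?case using insert by simp
qed

lemma complete:
  assumes "\<And>k. f k \<in> S" "\<And>e. e > 0 \<Longrightarrow> \<exists>K. \<forall>m\<ge>K. \<forall>n\<ge>K. N (f m - f n) < e"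
  shows "\<exists>x\<in>S. (\<lambda>k. N (f k - x)) \<longlonglongrightarrow> 0"
  using bs assms unfolding banach_sp_def is_cbanach_def
  by (simp add: scaleCx_m1 flip: diff_conv_add_uminus)

lemma series_lim:
  assumes c: "\<And>k. c k \<in> S" and sm: "summable (\<lambda>k. N (c k))"
  shows "\<exists>L\<in>S. (\<lambda>M. N (L - (\<Sum>k<M. c k))) \<longlonglongrightarrow> 0"
proof -
  let ?A = "\<lambda>M. \<Sum>k<M. c k"
  have AS: "?A M \<in> S" for M using c by (intro sum_in) auto
  have "\<exists>K. \<forall>m\<ge>K. \<forall>n\<ge>K. N (?A m - ?A n) < e" if e: "e > 0" for e
  proof -
    obtain K where K: "\<forall>m\<ge>K. \<forall>n. norm (sum (\<lambda>k. N (c k)) {m..<n}) < e"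
      using summable_Cauchy[THEN iffD1, OF sm, rule_format, OF e] by blast
    have main: "N (?A m - ?A n) < e" if "K \<le> n" "n \<le> m" for m n
    proof -
      have "(\<Sum>k\<in>{0..<m}. c k) - (\<Sum>k\<in>{0..<n}. c k) = (\<Sum>k\<in>{n..<m}. c k)"
        by (rule sum_diff_nat_ivl) (use that in auto)
      then have "?A m - ?A n = (\<Sum>k\<in>{n..<m}. c k)" by (simp only: lessThan_atLeast0)
      then have "N (?A m - ?A n) \<le> (\<Sum>k\<in>{n..<m}. N (c k))" using N_sum[of "{n..<m}" c] c by simp
      also have "\<dots> < e"
      proof -
        have "norm (\<Sum>k\<in>{n..<m}. N (c k)) < e" using K that by blast
        then show ?thesis by (simp add: abs_less_iff)
      qed
      finally show ?thesis .
    qed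
    show ?thesis
    proof (intro exI allI impI)
      fix m n assume "K \<le> m" "K \<le> n"
      show "N (?A m - ?A n) < e"
      proof (cases "n \<le> m")
        case True then show ?thesis using main \<open>K \<le> n\<close> by blast
      next
        case False
        then have "N (?A n - ?A m) < e" using main \<open>K \<le> m\<close> by simp
        then show ?thesis using N_sym[OF AS AS] by simp
      qed
    qed
  qed
  note cau = this
  have "\<exists>x\<in>S. (\<lambda>k. N (?A k - x)) \<longlonglongrightarrow> 0"
    by (rule complete[of ?A]) (rule AS, rule cau)
  then obtain L where L: "L \<in> S" "(\<lambda>k. N (?A k - L)) \<longlonglongrightarrow> 0" by blast
  have eq: "(\<lambda>k. N (L - ?A k)) = (\<lambda>k. N (?A k - L))" using N_sym[OF L(1) AS] by simp
  show ?thesis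
  proof (rule bexI[of _ L])
    show "(\<lambda>k. N (L - ?A k)) \<longlonglongrightarrow> 0" unfolding eq by (rule L(2))
  qed (rule L(1))
qed

lemma lim_bound:
  assumes "L \<in> S" "\<And>k. A k \<in> S" "(\<lambda>k. N (L - A k)) \<longlonglongrightarrow> 0" "\<And>k. N (A k) \<le> B"
  shows "N L \<le> B"
proof -
  have "N L \<le> N (L - A k) + B" for k
  proof -
    have "N L = N ((L - A k) + A k)" by simp
    also have "\<dots> \<le> N (L - A k) + N (A k)" by (rule N_tri) (use assms(1,2) diff_in in auto)
    finally show ?thesis using assms(4)[of k] by linarith
  qed
  then have "N L \<le> 0 + B"
    by (intro LIMSEQ_le[OF tendsto_const tendsto_add[OF assms(3) tendsto_const]]) auto
  then show ?thesis by simp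
qed

end



definition slim :: "'v::cnormed set \<Rightarrow> ('v \<Rightarrow> real) \<Rightarrow> (nat \<Rightarrow> 'v) \<Rightarrow> 'v" where
  "slim S N A = (SOME L. L \<in> S \<and> (\<lambda>k. N (L - A k)) \<longlonglongrightarrow> 0)"

context bsp begin

lemma slim:
  assumes c: "\<And>k. c k \<in> S" and sm: "summable (\<lambda>k. N (c k))"
  shows "slim S N (\<lambda>M. \<Sum>k<M. c k) \<in> S \<and> (\<lambda>M. N (slim S N (\<lambda>M. \<Sum>k<M. c k) - (\<Sum>k<M. c k))) \<longlonglongrightarrow> 0"
proof -
  have "\<exists>L. L \<in> S \<and> (\<lambda>M. N (L - (\<Sum>k<M. c k))) \<longlonglongrightarrow> 0" using series_lim[OF c sm] by blast
  then show ?thesis unfolding slim_def by (rule someI_ex)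
qed

lemma lim_null:
  assumes "\<And>k. x k \<in> S" "\<And>k. N (x k) \<le> g k" "g \<longlonglongrightarrow> 0"
  shows "(\<lambda>k. N (x k)) \<longlonglongrightarrow> 0"
proof (rule Lim_null_comparison[OF _ assms(3)])
  show "\<forall>\<^sub>F k in sequentially. norm (N (x k)) \<le> g k"
    using assms(1,2) N_nonneg by (simp add: abs_of_nonneg)
qed

lemma diffquot:
  fixes \<phi> :: "nat \<Rightarrow> complex \<Rightarrow> complex" and \<psi> G :: "nat \<Rightarrow> _"
  assumes c: "\<And>k. c k \<in> S"
    and s1: "summable (\<lambda>k. cmod (\<phi> k w) * N (c k))"
    and s2: "summable (\<lambda>k. cmod (\<phi> k z) * N (c k))"
    and s3: "summable (\<lambda>k. cmod (\<psi> k) * N (c k))"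
    and s4: "summable (\<lambda>k. G k * N (c k))"
    and E: "\<And>k. cmod (\<phi> k w - \<phi> k z - \<psi> k * (w - z)) \<le> G k * cmod (w - z) ^ 2"
    and wz: "w \<noteq> z"
  shows "N (scaleCx (inverse (w - z)) (slim S N (\<lambda>M. \<Sum>k<M. scaleCx (\<phi> k w) (c k))
              - slim S N (\<lambda>M. \<Sum>k<M. scaleCx (\<phi> k z) (c k)))
           - slim S N (\<lambda>M. \<Sum>k<M. scaleCx (\<psi> k) (c k)))
         \<le> cmod (w - z) * (\<Sum>k. G k * N (c k))"
proof -
  define d where "d = w - z"
  have d0: "d \<noteq> 0" using wz by (simp add: d_def)
  define Aw where "Aw = (\<lambda>M. \<Sum>k<M. scaleCx (\<phi> k w) (c k))"
  define Az where "Az = (\<lambda>M. \<Sum>k<M. scaleCx (\<phi> k z) (c k))"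
  define A' where "A' = (\<lambda>M. \<Sum>k<M. scaleCx (\<psi> k) (c k))"
  define Lw where "Lw = slim S N Aw"
  define Lz where "Lz = slim S N Az"
  define L' where "L' = slim S N A'"
  have Ns: "N (scaleCx a (c k)) = cmod a * N (c k)" for a k using N_scale[OF c] .
  have cs: "scaleCx a (c k) \<in> S" for a k using scale_in[OF c] .
  have Lw: "Lw \<in> S" "(\<lambda>M. N (Lw - Aw M)) \<longlonglongrightarrow> 0"
    using slim[of "\<lambda>k. scaleCx (\<phi> k w) (c k)"] cs s1 unfolding Lw_def Aw_def Ns by auto
  have Lz: "Lz \<in> S" "(\<lambda>M. N (Lz - Az M)) \<longlonglongrightarrow> 0"
    using slim[of "\<lambda>k. scaleCx (\<phi> k z) (c k)"] cs s2 unfolding Lz_def Az_def Ns by auto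
  have L': "L' \<in> S" "(\<lambda>M. N (L' - A' M)) \<longlonglongrightarrow> 0"
    using slim[of "\<lambda>k. scaleCx (\<psi> k) (c k)"] cs s3 unfolding L'_def A'_def Ns by auto
  have AS: "Aw M \<in> S" "Az M \<in> S" "A' M \<in> S" for M
    unfolding Aw_def Az_def A'_def by (auto intro!: sum_in cs)
  define \<theta> where "\<theta> k = inverse d * (\<phi> k w - \<phi> k z) - \<psi> k" for k
  define D where "D M = (\<Sum>k<M. scaleCx (\<theta> k) (c k))" for M
  have DS: "D M \<in> S" for M unfolding D_def by (auto intro!: sum_in cs)
  have Deq: "D M = scaleCx (inverse d) (Aw M - Az M) - A' M" for M
  proof -
    have "scaleCx (\<theta> k) (c k) = scaleCx (inverse d) (scaleCx (\<phi> k w) (c k) - scaleCx (\<phi> k z) (c k))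
       - scaleCx (\<psi> k) (c k)" for k
      unfolding \<theta>_def scaleCx_diff_left scaleCx_diff_right scaleCx_scaleCx right_diff_distrib ..
    then have "D M = (\<Sum>k<M. scaleCx (inverse d) (scaleCx (\<phi> k w) (c k) - scaleCx (\<phi> k z) (c k))
       - scaleCx (\<psi> k) (c k))" unfolding D_def by simp
    also have "\<dots> = scaleCx (inverse d) (Aw M - Az M) - A' M"
      unfolding sum_subtractf Aw_def Az_def A'_def scaleCx_sum_right[symmetric] ..
    finally show ?thesis .
  qed
  define T where "T = scaleCx (inverse d) (Lw - Lz) - L'"
  have TS: "T \<in> S" unfolding T_def using Lw Lz L' by (intro diff_in scale_in) auto
  have Teq: "T - D M = scaleCx (inverse d) ((Lw - Aw M) - (Lz - Az M)) - (L' - A' M)" for M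
    unfolding T_def Deq scaleCx_diff_right by (simp add: algebra_simps)
  have conv: "(\<lambda>M. N (T - D M)) \<longlonglongrightarrow> 0"
  proof (rule lim_null)
    show "T - D M \<in> S" for M using TS DS by (rule diff_in)
    show "N (T - D M) \<le> cmod (inverse d) * (N (Lw - Aw M) + N (Lz - Az M)) + N (L' - A' M)" for M
    proof -
      have m: "Lw - Aw M \<in> S" "Lz - Az M \<in> S" "L' - A' M \<in> S" using Lw Lz L' AS by (auto intro: diff_in)
      have "N (T - D M) \<le> N (scaleCx (inverse d) ((Lw - Aw M) - (Lz - Az M))) + N (L' - A' M)"
        unfolding Teq by (rule N_tri_diff[OF scale_in[OF diff_in[OF m(1,2)]] m(3)])
      also have "N (scaleCx (inverse d) ((Lw - Aw M) - (Lz - Az M))) \<le> cmod (inverse d) * (N (Lw - Aw M) + N (Lz - Az M))"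
        using N_scale[OF diff_in[OF m(1,2)]] N_tri_diff[OF m(1,2)] by (simp add: mult_left_mono)
      finally show ?thesis by linarith
    qed
    show "(\<lambda>M. cmod (inverse d) * (N (Lw - Aw M) + N (Lz - Az M)) + N (L' - A' M)) \<longlonglongrightarrow> 0"
      using tendsto_add[OF tendsto_mult[OF tendsto_const tendsto_add[OF Lw(2) Lz(2)]] L'(2)] by simp
  qed
  have G0: "0 \<le> G k" for k
  proof -
    have "0 \<le> G k * cmod d ^ 2" using E[of k] unfolding d_def by (meson norm_ge_zero order_trans)
    then show ?thesis using d0 by (simp add: zero_le_mult_iff)
  qed
  have th: "cmod (\<theta> k) \<le> cmod d * G k" for k
  proof -
    have "\<theta> k = inverse d * (\<phi> k w - \<phi> k z - \<psi> k * d)" unfolding \<theta>_def using d0 by (simp add: field_simps)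
    then have "cmod (\<theta> k) = cmod (\<phi> k w - \<phi> k z - \<psi> k * d) / cmod d" by (simp add: norm_mult norm_inverse divide_inverse)
    also have "\<dots> \<le> G k * cmod d ^ 2 / cmod d" using E[of k] d0 unfolding d_def by (simp add: divide_right_mono)
    also have "\<dots> = cmod d * G k" using d0 by (simp add: power2_eq_square)
    finally show ?thesis .
  qed
  have "N T \<le> cmod d * (\<Sum>k. G k * N (c k))"
  proof (rule lim_bound[OF TS DS])
    show "(\<lambda>k. N (T - D k)) \<longlonglongrightarrow> 0" by (rule conv)
    fix M
    have "N (D M) \<le> (\<Sum>k<M. N (scaleCx (\<theta> k) (c k)))" unfolding D_def by (rule N_sum) (rule cs)
    also have "\<dots> \<le> (\<Sum>k<M. cmod d * (G k * N (c k)))"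
      unfolding Ns using th N_nonneg[OF c]
      by (intro sum_mono) (metis mult.assoc mult_right_mono)
    also have "\<dots> = cmod d * (\<Sum>k<M. G k * N (c k))" by (simp add: sum_distrib_left)
    also have "\<dots> \<le> cmod d * (\<Sum>k. G k * N (c k))"
      using s4 G0 N_nonneg[OF c] by (intro mult_left_mono sum_le_suminf) auto
    finally show "N (D M) \<le> cmod d * (\<Sum>k. G k * N (c k))" .
  qed
  then show ?thesis unfolding T_def Lw_def Lz_def L'_def Aw_def Az_def A'_def d_def .
qed

end


lemma aux_rho: fixes X Y c D \<rho> :: real
  assumes "X \<le> \<rho>*Y + c*\<rho>^j*D" "0 < \<rho>"
  shows "\<rho>^2*X \<le> \<rho>*(\<rho>^2*Y) + c*\<rho>^(j+2)*D"
proof -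
  have "\<rho>^2*X \<le> \<rho>^2*(\<rho>*Y + c*\<rho>^j*D)" using assms by (intro mult_left_mono) auto
  also have "\<dots> = \<rho>*(\<rho>^2*Y) + c*\<rho>^(j+2)*D" by (simp add: power_add algebra_simps power2_eq_square)
  finally show ?thesis .
qed

lemma E_bound:
  fixes w z :: complex
  assumes rho: "0 < \<rho>" and w: "cmod w \<le> \<rho>" and z: "cmod z \<le> \<rho>"
  shows "\<rho>^2 * cmod (w^k - z^k - of_nat k * z^(k-1) * (w - z)) \<le> (real k)^2 * \<rho>^k * cmod (w - z)^2"
proof (induction k)
  case 0 then show ?case by simp
next
  case (Suc k)
  show ?case
  proof (cases k)
    case 0 then show ?thesis using rho by simp
  next
    case (Suc j)
    let ?E = "\<lambda>k. w^k - z^k - of_nat k * z^(k-1) * (w - z)"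
    have id: "?E (Suc k) = w * ?E k + of_nat k * z^j * (w - z)^2"
      unfolding Suc by (simp add: algebra_simps power2_eq_square)
    have "cmod (?E (Suc k)) \<le> cmod w * cmod (?E k) + real k * cmod z ^ j * cmod (w - z)^2"
      unfolding id by (rule order_trans[OF norm_triangle_ineq]) (simp add: norm_mult norm_power)
    also have "\<dots> \<le> \<rho> * cmod (?E k) + real k * \<rho> ^ j * cmod (w - z)^2"
      using w z by (intro add_mono mult_right_mono mult_left_mono power_mono) auto
    finally have A: "\<rho>^2 * cmod (?E (Suc k)) \<le> \<rho> * (\<rho>^2 * cmod (?E k)) + real k * \<rho> ^ (j+2) * cmod (w - z)^2"
      using rho by (rule aux_rho)
    have "\<rho> * (\<rho>^2 * cmod (?E k)) \<le> \<rho> * ((real k)^2 * \<rho>^k * cmod (w - z)^2)"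
      using Suc.IH rho by (simp add: mult_left_mono)
    with A have "\<rho>^2 * cmod (?E (Suc k)) \<le> ((real k)^2 + real k) * \<rho>^(Suc k) * cmod (w - z)^2"
      unfolding Suc by (simp add: algebra_simps)
    also have "\<dots> \<le> (real (Suc k))^2 * \<rho>^(Suc k) * cmod (w - z)^2"
      using rho by (intro mult_right_mono) (auto simp: power2_eq_square algebra_simps)
    finally show ?thesis .
  qed
qed

lemma summable_sq_geom:
  fixes q :: real
  assumes "0 \<le> q" "q < 1"
  shows "summable (\<lambda>k. (real k + 1)^2 * q^k)"
proof -
  define t where "t = root 3 q"
  have t0: "0 \<le> t" using assms unfolding t_def by simp
  have t3: "t^3 = q" unfolding t_def using assms by (simp add: real_root_pow_pos2)
  have t1: "t < 1" unfolding t_def using assms by simp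
  have "(\<lambda>k. of_nat k * t^k) \<longlonglongrightarrow> 0" by (rule powser_times_n_limit_0) (use t0 t1 in simp)
  moreover have "(\<lambda>k. t^k) \<longlonglongrightarrow> 0" by (rule LIMSEQ_power_zero) (use t0 t1 in simp)
  ultimately have "(\<lambda>k. (real k + 1) * t^k) \<longlonglongrightarrow> 0"
    using tendsto_add by (force simp: algebra_simps)
  then have "Bseq (\<lambda>k. (real k + 1) * t^k)" by (rule convergent_imp_Bseq[OF convergentI])
  then obtain B where B: "B > 0" "\<And>k. norm ((real k + 1) * t^k) \<le> B" by (auto elim: BseqE)
  show ?thesis
  proof (rule summable_comparison_test'[where N=0])
    show "summable (\<lambda>k. B^2 * t^k)" using t0 t1 by (intro summable_mult summable_geometric) simp
    fix k :: nat
    have e1: "(t^k)^2 * t^k = t^(k+k+k)" by (simp add: power2_eq_square power_add)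
    have e2: "k+k+k = 3*k" by simp
    have "q^k = (t^k)^2 * t^k" unfolding e1 e2 power_mult t3 ..
    then have "(real k + 1)^2 * q^k = ((real k + 1) * t^k)^2 * t^k"
      by (simp add: power_mult_distrib)
    also have "\<dots> \<le> B^2 * t^k"
      using B(2)[of k] t0 by (intro mult_right_mono power_mono) (auto simp: abs_le_iff)
    finally show "norm ((real k + 1)^2 * q^k) \<le> B^2 * t^k" using assms by simp
  qed
qed



lemma Eneg_bound:
  fixes w z :: complex
  assumes w0: "w \<noteq> 0" and z0: "z \<noteq> 0" and rho: "0 < \<rho>"
    and wr: "cmod (inverse w) \<le> \<rho>" and zr: "cmod (inverse z) \<le> \<rho>"
  shows "cmod (inverse w ^ Suc k - inverse z ^ Suc k - (- (of_nat (Suc k) * inverse z ^ (k+2))) * (w - z))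
         \<le> ((real (Suc k))^2 + real (Suc k)) * \<rho>^(k+3) * cmod (w - z)^2"
proof -
  define u where "u = inverse w"
  define v where "v = inverse z"
  define m where "m = Suc k"
  define d where "d = w - z"
  have small: "v^2 * d = v - u + v^2 * u * d^2"
    unfolding u_def v_def d_def using w0 z0 by (simp add: field_simps power2_eq_square)
  define E where "E = u^m - v^m - of_nat m * v^(m-1) * (u - v)"
  have id: "u ^ Suc k - v ^ Suc k - (- (of_nat (Suc k) * v ^ (k+2))) * d
     = E + of_nat m * v^(k+2) * u * d^2"
  proof -
    have "u ^ Suc k - v ^ Suc k - (- (of_nat (Suc k) * v ^ (k+2))) * d
        = u ^ Suc k - v ^ Suc k + of_nat (Suc k) * v^k * (v^2 * d)"
      by (simp add: power_add algebra_simps power2_eq_square)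
    also have "\<dots> = u ^ Suc k - v ^ Suc k + of_nat (Suc k) * v^k * (v - u + v^2 * u * d^2)"
      unfolding small ..
    also have "\<dots> = E + of_nat m * v^(k+2) * u * d^2"
      unfolding E_def m_def by (simp add: power_add algebra_simps power2_eq_square)
    finally show ?thesis .
  qed
  have uv: "u - v = - d * u * v"
    unfolding u_def v_def d_def using w0 z0 by (simp add: field_simps)
  have ur: "cmod u \<le> \<rho>" and vr: "cmod v \<le> \<rho>" using wr zr by (auto simp: u_def v_def)
  have "cmod (u - v) \<le> cmod d * \<rho>^2"
    unfolding uv norm_mult norm_minus_cancel power2_eq_square
    using ur vr rho by (simp add: mult.assoc) (intro mult_left_mono mult_mono, auto)
  then have uv2: "cmod (u - v)^2 \<le> cmod d^2 * \<rho>^4"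
    using power_mono[of "cmod (u-v)" "cmod d * \<rho>^2" 2]
    by (simp add: power_mult_distrib flip: power_mult)
  have "\<rho>^2 * cmod E \<le> (real m)^2 * \<rho>^m * cmod (u - v)^2"
    unfolding E_def by (rule E_bound[OF rho ur vr])
  also have "\<dots> \<le> (real m)^2 * \<rho>^m * (cmod d^2 * \<rho>^4)"
    using uv2 rho by (intro mult_left_mono) auto
  also have "\<dots> = \<rho>^2 * ((real m)^2 * \<rho>^(k+3) * cmod d^2)"
  proof -
    have "\<rho> ^ Suc k * \<rho> ^ 4 = \<rho>^(Suc k + 4)" by (rule power_add[symmetric])
    also have "\<dots> = \<rho>^(2 + (k+3))" by simp
    also have "\<dots> = \<rho>^2 * \<rho>^(k+3)" by (rule power_add)
    finally have "\<rho> ^ Suc k * \<rho> ^ 4 = \<rho>^2 * \<rho>^(k+3)" .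
    then show ?thesis unfolding m_def by (simp add: algebra_simps)
  qed
  finally have E1: "cmod E \<le> (real m)^2 * \<rho>^(k+3) * cmod d^2"
    using rho by simp
  have E2: "cmod (of_nat m * v^(k+2) * u * d^2) \<le> real m * \<rho>^(k+3) * cmod d^2"
  proof -
    have "cmod (of_nat m * v^(k+2) * u * d^2) = real m * (cmod v^(k+2) * cmod u) * cmod d^2"
      by (simp add: norm_mult norm_power)
    also have "\<dots> \<le> real m * (\<rho>^(k+2) * \<rho>) * cmod d^2"
      using ur vr rho by (intro mult_right_mono mult_left_mono mult_mono power_mono) auto
    also have "\<dots> = real m * \<rho>^(k+3) * cmod d^2" by (simp add: power_add power3_eq_cube)
    finally show ?thesis .
  qed
  have "cmod (u ^ Suc k - v ^ Suc k - (- (of_nat (Suc k) * v ^ (k+2))) * d)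
      \<le> cmod E + cmod (of_nat m * v^(k+2) * u * d^2)" unfolding id by (rule norm_triangle_ineq)
  also have "\<dots> \<le> ((real m)^2 + real m) * \<rho>^(k+3) * cmod d^2"
    using E1 E2 by (simp add: algebra_simps)
  finally show ?thesis unfolding u_def v_def d_def m_def .
qed



lemma zsum_split:
  fixes g :: "int \<Rightarrow> 'a::comm_monoid_add"
  shows "(\<Sum>n\<in>{-int N..int M}. g n) = (\<Sum>k<N. g (-int (Suc k))) + (\<Sum>k<Suc M. g (int k))"
proof (induction N)
  case 0
  have "(\<Sum>n\<in>{0..int M}. g n) = (\<Sum>n\<in>int ` {0..M}. g n)" by (simp add: image_int_atLeastAtMost)
  also have "\<dots> = (\<Sum>k\<in>{0..M}. g (int k))" by (rule sum.reindex_cong[where l=int]) auto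
  also have "\<dots> = (\<Sum>k<Suc M. g (int k))" by (simp add: atLeast0AtMost lessThan_Suc_atMost)
  finally show ?case by simp
next
  case (Suc N)
  have e: "{-int (Suc N)..int M} = insert (-int (Suc N)) {-int N..int M}" by auto
  have "(\<Sum>n\<in>{-int (Suc N)..int M}. g n) = g (-int (Suc N)) + (\<Sum>n\<in>{-int N..int M}. g n)"
    unfolding e by (rule sum.insert) auto
  also have "\<dots> = (\<Sum>k<Suc N. g (-int (Suc k))) + (\<Sum>k<Suc M. g (int k))"
    unfolding Suc by (simp add: add_ac)
  finally show ?case .
qed

locale cpl = B0: bsp B0 N0 + B1: bsp B1 N1
  for B0 :: "'v::cnormed set" and N0 and B1 :: "'v set" and N1
begin

lemma sum_space_in: "a \<in> B0 \<Longrightarrow> c \<in> B1 \<Longrightarrow> a + c \<in> sum_space B0 B1"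
  unfolding sum_space_def by blast

lemma sum_norm_le:
  assumes "a \<in> B0" "c \<in> B1"
  shows "sum_norm B0 N0 B1 N1 (a + c) \<le> N0 a + N1 c"
  unfolding sum_norm_def
proof (rule cInf_lower)
  show "N0 a + N1 c \<in> {N0 a' + N1 c' |a' c'. a' \<in> B0 \<and> c' \<in> B1 \<and> a + c = a' + c'}"
    using assms by blast
  show "bdd_below {N0 a' + N1 c' |a' c'. a' \<in> B0 \<and> c' \<in> B1 \<and> a + c = a' + c'}"
    by (rule bdd_belowI[of _ 0]) (auto intro!: add_nonneg_nonneg B0.N_nonneg B1.N_nonneg)
qed

end



lemma le_sq_mult: "0 \<le> (x::real) \<Longrightarrow> x \<le> (real k + 1)^2 * x"
proof -
  assume x: "0 \<le> x"
  have o: "1 \<le> (real k + 1)^2" by (rule one_le_power) simp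
  show ?thesis using mult_right_mono[OF o x] by simp
qed

locale lau = cpl B0 N0 B1 N1
  for B0 :: "'v::cnormed set" and N0 and B1 :: "'v set" and N1 +
  fixes b :: "int \<Rightarrow> 'v" and K0 K1 :: real
  assumes b0: "\<And>n. b n \<in> B0" and b1: "\<And>n. b n \<in> B1"
    and K0: "\<And>n. N0 (b n) \<le> K0"
    and K1: "\<And>k. N1 (b (int k)) \<le> K1 * inverse (exp 1) ^ k"
begin

lemma K0_nonneg: "0 \<le> K0" using K0[of 0] B0.N_nonneg[OF b0[of 0]] by linarith
lemma K1_nonneg: "0 \<le> K1" using K1[of 0] B1.N_nonneg[OF b1[of 0]] by simp

lemma sumP:
  fixes g :: "nat \<Rightarrow> real"
  assumes R: "0 \<le> R" "R < exp 1" and g: "\<And>k. \<bar>g k\<bar> \<le> C * (real k + 1)^2 * R^k"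
  shows "summable (\<lambda>k. g k * N1 (b (int k)))"
proof (rule summable_comparison_test'[where N=0])
  have "summable (\<lambda>k. (real k + 1)^2 * (R / exp 1)^k)"
    by (rule summable_sq_geom) (use R in auto)
  then show "summable (\<lambda>k. C * K1 * ((real k + 1)^2 * (R / exp 1)^k))" by (rule summable_mult)
  fix k :: nat
  have "norm (g k * N1 (b (int k))) = \<bar>g k\<bar> * N1 (b (int k))"
    using B1.N_nonneg[OF b1] by (simp add: abs_mult)
  also have "\<dots> \<le> (C * (real k + 1)^2 * R^k) * (K1 * inverse (exp 1) ^ k)"
    using g[of k] K1[of k] B1.N_nonneg[OF b1] by (intro mult_mono) auto
  also have "\<dots> = C * K1 * ((real k + 1)^2 * (R / exp 1)^k)"
    by (simp add: power_divide divide_inverse power_mult_distrib power_inverse)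
  finally show "norm (g k * N1 (b (int k))) \<le> C * K1 * ((real k + 1)^2 * (R / exp 1)^k)" .
qed

lemma sumQ:
  fixes g :: "nat \<Rightarrow> real"
  assumes R: "0 \<le> \<rho>" "\<rho> < 1" and g: "\<And>k. \<bar>g k\<bar> \<le> C * (real k + 1)^2 * \<rho>^k"
  shows "summable (\<lambda>k. g k * N0 (b (- int (Suc k))))"
proof (rule summable_comparison_test'[where N=0])
  have "summable (\<lambda>k. (real k + 1)^2 * \<rho>^k)"
    by (rule summable_sq_geom) (use R in auto)
  then show "summable (\<lambda>k. C * K0 * ((real k + 1)^2 * \<rho>^k))" by (rule summable_mult)
  fix k :: nat
  have "norm (g k * N0 (b (- int (Suc k)))) = \<bar>g k\<bar> * N0 (b (- int (Suc k)))"
    using B0.N_nonneg[OF b0] by (simp add: abs_mult)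
  also have "\<dots> \<le> (C * (real k + 1)^2 * \<rho>^k) * K0"
    using g[of k] K0 B0.N_nonneg[OF b0] by (intro mult_mono) auto
  also have "\<dots> = C * K0 * ((real k + 1)^2 * \<rho>^k)" by simp
  finally show "norm (g k * N0 (b (- int (Suc k)))) \<le> C * K0 * ((real k + 1)^2 * \<rho>^k)" .
qed

definition Pp where "Pp z = (\<lambda>M. \<Sum>k<M. scaleCx (z^k) (b (int k)))"
definition Qp where "Qp z = (\<lambda>M. \<Sum>k<M. scaleCx (inverse z ^ Suc k) (b (- int (Suc k))))"
definition P where "P z = slim B1 N1 (Pp z)"
definition Q where "Q z = slim B0 N0 (Qp z)"
definition FF where "FF z = Q z + P z"
definition P' where "P' z = slim B1 N1 (\<lambda>M. \<Sum>k<M. scaleCx (of_nat k * z^(k-1)) (b (int k)))"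
definition Q' where "Q' z = slim B0 N0 (\<lambda>M. \<Sum>k<M. scaleCx (- (of_nat (Suc k) * inverse z ^ (k+2))) (b (- int (Suc k))))"

lemma P_conv:
  assumes "cmod z < exp 1"
  shows "P z \<in> B1" "(\<lambda>M. N1 (P z - Pp z M)) \<longlonglongrightarrow> 0"
proof -
  have s: "summable (\<lambda>k. N1 (scaleCx (z^k) (b (int k))))"
  proof -
    have "summable (\<lambda>k. cmod (z^k) * N1 (b (int k)))"
      by (rule sumP[where R="cmod z" and C=1]) (use assms in \<open>auto simp: norm_power intro: le_sq_mult\<close>)
    then show ?thesis using B1.N_scale[OF b1] by simp
  qed
  show "P z \<in> B1" "(\<lambda>M. N1 (P z - Pp z M)) \<longlonglongrightarrow> 0"
    using B1.slim[of "\<lambda>k. scaleCx (z^k) (b (int k))", OF B1.scale_in[OF b1] s]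
    unfolding P_def Pp_def by auto
qed

lemma Q_conv:
  assumes "1 < cmod z"
  shows "Q z \<in> B0" "(\<lambda>M. N0 (Q z - Qp z M)) \<longlonglongrightarrow> 0"
proof -
  have s: "summable (\<lambda>k. N0 (scaleCx (inverse z ^ Suc k) (b (- int (Suc k)))))"
  proof -
    have i1: "cmod (inverse z) < 1" using assms by (simp add: norm_inverse inverse_less_1_iff)
    have "summable (\<lambda>k. cmod (inverse z ^ Suc k) * N0 (b (- int (Suc k))))"
    proof (rule sumQ[where \<rho>="cmod (inverse z)" and C=1])
      fix k
      have "cmod (inverse z) ^ Suc k \<le> cmod (inverse z) ^ k"
        using i1 by (intro power_decreasing) auto
      also have "\<dots> \<le> 1 * (real k + 1)^2 * cmod (inverse z) ^ k"
        by (simp add: le_sq_mult)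
      finally show "\<bar>cmod (inverse z ^ Suc k)\<bar> \<le> 1 * (real k + 1)^2 * cmod (inverse z) ^ k"
        by (simp add: norm_power del: power_Suc)
    qed (use i1 in auto)
    then show ?thesis using B0.N_scale[OF b0] by simp
  qed
  show "Q z \<in> B0" "(\<lambda>M. N0 (Q z - Qp z M)) \<longlonglongrightarrow> 0"
    using B0.slim[of "\<lambda>k. scaleCx (inverse z ^ Suc k) (b (- int (Suc k)))", OF B0.scale_in[OF b0] s]
    unfolding Q_def Qp_def by auto
qed

end


context lau begin

lemma Pp_in: "Pp z M \<in> B1" unfolding Pp_def by (intro B1.sum_in B1.scale_in b1)
lemma Qp_in: "Qp z M \<in> B0" unfolding Qp_def by (intro B0.sum_in B0.scale_in b0)

lemma ev_lt:
  assumes "(\<lambda>M. X M) \<longlonglongrightarrow> (0::real)" "e > 0"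
  shows "\<exists>K. \<forall>M\<ge>K. X M < e"
proof -
  obtain K where "\<forall>M\<ge>K. norm (X M - 0) < e" using LIMSEQ_D[OF assms] by blast
  then have "\<forall>M\<ge>K. X M < e" by (auto simp: abs_less_iff)
  then show ?thesis by blast
qed

lemma FF_zsum:
  assumes z: "z \<in> annulus"
  shows "zsum_conv B0 N0 B1 N1 (\<lambda>n. scaleCx (z powi n) (b n)) (FF z)"
proof -
  have z1: "1 < cmod z" and z2: "cmod z < exp 1" using z by (auto simp: annulus_def)
  note Q = Q_conv[OF z1] and P = P_conv[OF z2]
  have sp: "FF z \<in> sum_space B0 B1" unfolding FF_def using Q(1) P(1) by (rule sum_space_in)
  have sumeq: "(\<Sum>n\<in>{- int N..int M}. scaleCx (z powi n) (b n)) = Qp z N + Pp z (Suc M)" for N M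
  proof -
    have pw: "z powi (- int (Suc k)) = inverse z ^ Suc k" for k
      by (simp only: power_int_minus power_int_of_nat power_inverse)
    show ?thesis unfolding zsum_split Qp_def Pp_def pw by simp
  qed
  show ?thesis unfolding zsum_conv_def
  proof (intro conjI sp allI impI)
    fix e :: real assume e: "e > 0"
    obtain Ka where Ka: "\<forall>N\<ge>Ka. N0 (Q z - Qp z N) < e/2" using ev_lt[OF Q(2), of "e/2"] e by auto
    obtain Kb where Kb: "\<forall>M\<ge>Kb. N1 (P z - Pp z M) < e/2" using ev_lt[OF P(2), of "e/2"] e by auto
    show "\<exists>K. \<forall>M\<ge>K. \<forall>N\<ge>K. sum_norm B0 N0 B1 N1 (FF z - (\<Sum>n\<in>{- int N..int M}. scaleCx (z powi n) (b n))) < e"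
    proof (intro exI[of _ "max Ka Kb"] allI impI)
      fix M N assume MN: "max Ka Kb \<le> M" "max Ka Kb \<le> N"
      have d: "FF z - (\<Sum>n\<in>{- int N..int M}. scaleCx (z powi n) (b n)) = (Q z - Qp z N) + (P z - Pp z (Suc M))"
        unfolding sumeq FF_def by (simp add: algebra_simps)
      have "sum_norm B0 N0 B1 N1 ((Q z - Qp z N) + (P z - Pp z (Suc M))) \<le> N0 (Q z - Qp z N) + N1 (P z - Pp z (Suc M))"
        by (rule sum_norm_le) (auto intro: B0.diff_in B1.diff_in Q(1) P(1) Qp_in Pp_in)
      also have "\<dots> < e/2 + e/2" using Ka Kb MN by (intro add_strict_mono) auto
      finally show "sum_norm B0 N0 B1 N1 (FF z - (\<Sum>n\<in>{- int N..int M}. scaleCx (z powi n) (b n))) < e"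
        unfolding d by simp
    qed
  qed
qed

end


context lau begin

lemma sP3:
  assumes R: "1 \<le> R2" "R2 < exp 1" and z: "cmod z \<le> R2"
  shows "summable (\<lambda>k. cmod (of_nat k * z^(k-1)) * N1 (b (int k)))"
proof (rule sumP[where R=R2 and C=1])
  fix k
  have "cmod z ^ (k-1) \<le> R2 ^ (k-1)" using z by (intro power_mono) auto
  also have "\<dots> \<le> R2 ^ k" using R by (intro power_increasing) auto
  finally have a: "cmod z ^ (k-1) \<le> R2 ^ k" .
  have "real k \<le> (real k + 1)^2" by (simp add: power2_eq_square algebra_simps)
  then have "real k * cmod z ^ (k-1) \<le> (real k + 1)^2 * R2 ^ k"
    using a by (intro mult_mono) auto
  then show "\<bar>cmod (of_nat k * z^(k-1))\<bar> \<le> 1 * (real k + 1)^2 * R2^k"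
    by (simp add: norm_mult norm_power)
qed (use R in auto)

lemma P'_in:
  assumes R: "1 \<le> R2" "R2 < exp 1" and z: "cmod z \<le> R2"
  shows "P' z \<in> B1"
  using B1.slim[of "\<lambda>k. scaleCx (of_nat k * z^(k-1)) (b (int k))", OF B1.scale_in[OF b1]]
    sP3[OF assms] B1.N_scale[OF b1] unfolding P'_def by auto

lemma sQ3:
  assumes R: "1 < R1" and z: "R1 \<le> cmod z"
  shows "summable (\<lambda>k. cmod (- (of_nat (Suc k) * inverse z ^ (k+2))) * N0 (b (- int (Suc k))))"
proof (rule sumQ[where \<rho>="inverse R1" and C=1])
  fix k
  have iz: "cmod (inverse z) \<le> inverse R1" using R z by (simp add: norm_inverse le_imp_inverse_le)
  have i1: "inverse R1 \<le> 1" using R by (simp add: inverse_le_1_iff)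
  have "cmod (inverse z) ^ (k+2) \<le> inverse R1 ^ (k+2)" using iz by (intro power_mono) auto
  also have "\<dots> \<le> inverse R1 ^ k" using R i1 by (intro power_decreasing) auto
  finally have a: "cmod (inverse z) ^ (k+2) \<le> inverse R1 ^ k" .
  have "real (Suc k) \<le> (real k + 1)^2" by (simp add: power2_eq_square algebra_simps)
  then have "real (Suc k) * cmod (inverse z) ^ (k+2) \<le> (real k + 1)^2 * inverse R1 ^ k"
    using a by (intro mult_mono) auto
  then show "\<bar>cmod (- (of_nat (Suc k) * inverse z ^ (k+2)))\<bar> \<le> 1 * (real k + 1)^2 * inverse R1 ^ k"
    by (simp add: norm_mult norm_power del: of_nat_Suc power_Suc)
qed (use R in \<open>auto simp: inverse_less_1_iff\<close>)

lemma Q'_in: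
  assumes R: "1 < R1" and z: "R1 \<le> cmod z"
  shows "Q' z \<in> B0"
  using B0.slim[of "\<lambda>k. scaleCx (- (of_nat (Suc k) * inverse z ^ (k+2))) (b (- int (Suc k)))", OF B0.scale_in[OF b0]]
    sQ3[OF assms] B0.N_scale[OF b0] unfolding Q'_def by auto

end


context lau begin

lemma Ppart:
  assumes R: "1 \<le> R2" "R2 < exp 1" and w: "cmod w \<le> R2" and z: "cmod z \<le> R2" and wz: "w \<noteq> z"
  shows "N1 (scaleCx (inverse (w - z)) (P w - P z) - P' z)
    \<le> cmod (w - z) * (\<Sum>k. (real k)^2 * R2^k / R2^2 * N1 (b (int k)))"
proof -
  have s1: "summable (\<lambda>k. cmod (x^k) * N1 (b (int k)))" if "cmod x \<le> R2" for x
    by (rule sumP[where R=R2 and C=1]) (use R that in \<open>auto simp: norm_power intro!: le_sq_mult order_trans[OF power_mono[OF that]]\<close>)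
  have s4: "summable (\<lambda>k. (real k)^2 * R2^k / R2^2 * N1 (b (int k)))"
  proof (rule sumP[where R=R2 and C=1])
    fix k
    have o: "1 \<le> R2^2" using R by (intro one_le_power) auto
    have nn: "0 \<le> (real k)^2 * R2^k" using R by simp
    have "(real k)^2 * R2^k \<le> (real k)^2 * R2^k * R2^2" using mult_left_mono[OF o nn] by simp
    then have "(real k)^2 * R2^k / R2^2 \<le> (real k)^2 * R2^k"
      using R by (simp add: divide_le_eq)
    also have "\<dots> \<le> (real k + 1)^2 * R2^k" using R by (intro mult_right_mono power_mono) auto
    finally show "\<bar>(real k)^2 * R2^k / R2^2\<bar> \<le> 1 * (real k + 1)^2 * R2^k" using R by simp
  qed (use R in auto)
  have E: "cmod (w^k - z^k - of_nat k * z^(k-1) * (w - z)) \<le> (real k)^2 * R2^k / R2^2 * cmod (w - z)^2" for k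
  proof -
    have "R2^2 * cmod (w^k - z^k - of_nat k * z^(k-1) * (w - z)) \<le> (real k)^2 * R2^k * cmod (w - z)^2"
      by (rule E_bound) (use R w z in auto)
    then show ?thesis using R by (simp add: field_simps)
  qed
  show ?thesis
    using B1.diffquot[where c="\<lambda>k. b (int k)" and \<phi>="\<lambda>k x. x^k" and w=w and z=z
        and \<psi>="\<lambda>k. of_nat k * z^(k-1)" and G="\<lambda>k. (real k)^2 * R2^k / R2^2",
        OF b1 s1[OF w] s1[OF z] sP3[OF R z] s4 E wz]
    unfolding P_def Pp_def P'_def .
qed

lemma Qpart:
  assumes R: "1 < R1" and w: "R1 \<le> cmod w" and z: "R1 \<le> cmod z" and wz: "w \<noteq> z"
  shows "N0 (scaleCx (inverse (w - z)) (Q w - Q z) - Q' z)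
    \<le> cmod (w - z) * (\<Sum>k. ((real (Suc k))^2 + real (Suc k)) * inverse R1^(k+3) * N0 (b (- int (Suc k))))"
proof -
  have i1: "inverse R1 < 1" "0 < inverse R1" using R by (auto simp: inverse_less_1_iff)
  have ix: "cmod (inverse x) \<le> inverse R1" if "R1 \<le> cmod x" for x
    using R that by (simp add: norm_inverse le_imp_inverse_le)
  have s1: "summable (\<lambda>k. cmod (inverse x ^ Suc k) * N0 (b (- int (Suc k))))" if "R1 \<le> cmod x" for x
  proof (rule sumQ[where \<rho>="inverse R1" and C=1])
    fix k
    have "cmod (inverse x) ^ Suc k \<le> inverse R1 ^ Suc k" using ix[OF that] by (intro power_mono) auto
    also have "\<dots> \<le> inverse R1 ^ k" using i1 by (intro power_decreasing) auto
    also have "\<dots> \<le> (real k + 1)^2 * inverse R1 ^ k" using i1 by (intro le_sq_mult) auto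
    finally show "\<bar>cmod (inverse x ^ Suc k)\<bar> \<le> 1 * (real k + 1)^2 * inverse R1 ^ k"
      by (simp add: norm_power del: power_Suc)
  qed (use i1 in auto)
  have s4: "summable (\<lambda>k. ((real (Suc k))^2 + real (Suc k)) * inverse R1^(k+3) * N0 (b (- int (Suc k))))"
  proof (rule sumQ[where \<rho>="inverse R1" and C=2])
    fix k
    have a: "inverse R1^(k+3) \<le> inverse R1 ^ k" using i1 by (intro power_decreasing) auto
    have b: "(real (Suc k))^2 + real (Suc k) \<le> 2 * (real k + 1)^2"
      by (simp add: power2_eq_square algebra_simps)
    have "((real (Suc k))^2 + real (Suc k)) * inverse R1^(k+3) \<le> (2 * (real k + 1)^2) * inverse R1 ^ k"
      using a b i1 by (intro mult_mono) auto
    then show "\<bar>((real (Suc k))^2 + real (Suc k)) * inverse R1^(k+3)\<bar> \<le> 2 * (real k + 1)^2 * inverse R1 ^ k"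
      using i1 by (simp del: of_nat_Suc)
  qed (use i1 in auto)
  have E: "cmod (inverse w ^ Suc k - inverse z ^ Suc k - (- (of_nat (Suc k) * inverse z ^ (k+2))) * (w - z))
         \<le> ((real (Suc k))^2 + real (Suc k)) * inverse R1^(k+3) * cmod (w - z)^2" for k
    by (rule Eneg_bound) (use R w z ix i1 in auto)
  show ?thesis
    using B0.diffquot[where c="\<lambda>k. b (- int (Suc k))" and \<phi>="\<lambda>k x. inverse x ^ Suc k" and w=w and z=z
        and \<psi>="\<lambda>k. - (of_nat (Suc k) * inverse z ^ (k+2))"
        and G="\<lambda>k. ((real (Suc k))^2 + real (Suc k)) * inverse R1^(k+3)",
        OF b0 s1[OF w] s1[OF z] sQ3[OF R z] s4 E wz]
    unfolding Q_def Qp_def Q'_def .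
qed

end


context lau begin

lemma FF_analytic: "sum_analytic B0 N0 B1 N1 annulus FF"
  unfolding sum_analytic_def
proof (intro conjI ballI)
  fix z assume z: "z \<in> annulus"
  have z1: "1 < cmod z" and z2: "cmod z < exp 1" using z by (auto simp: annulus_def)
  show "FF z \<in> sum_space B0 B1" unfolding FF_def by (rule sum_space_in[OF Q_conv(1)[OF z1] P_conv(1)[OF z2]])
  define r where "r = min (cmod z - 1) (exp 1 - cmod z) / 2"
  have r0: "0 < r" using z1 z2 by (simp add: r_def)
  define R1 where "R1 = cmod z - r"
  define R2 where "R2 = cmod z + r"
  have R1: "1 < R1" and R2: "R2 < exp 1" "1 \<le> R2" and zR: "R1 \<le> cmod z" "cmod z \<le> R2"
  proof -
    have "r \<le> (cmod z - 1) / 2" "r \<le> (exp 1 - cmod z) / 2" unfolding r_def by auto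
    then show "1 < R1" "R2 < exp 1" "1 \<le> R2" "R1 \<le> cmod z" "cmod z \<le> R2"
      using z1 z2 r0 unfolding R1_def R2_def by auto
  qed
  define CP where "CP = (\<Sum>k. (real k)^2 * R2^k / R2^2 * N1 (b (int k)))"
  define CQ where "CQ = (\<Sum>k. ((real (Suc k))^2 + real (Suc k)) * inverse R1^(k+3) * N0 (b (- int (Suc k))))"
  have CP0: "0 \<le> CP"
  proof -
    have "summable (\<lambda>k. (real k)^2 * R2^k / R2^2 * N1 (b (int k)))"
    proof (rule sumP[where R=R2 and C=1])
      fix k
      have o: "1 \<le> R2^2" using R2 by (intro one_le_power) auto
      have nn: "0 \<le> (real k)^2 * R2^k" using R2 by simp
      have "(real k)^2 * R2^k \<le> (real k)^2 * R2^k * R2^2" using mult_left_mono[OF o nn] by simp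
      then have "(real k)^2 * R2^k / R2^2 \<le> (real k)^2 * R2^k"
        using R2 by (simp add: divide_le_eq)
      also have "\<dots> \<le> (real k + 1)^2 * R2^k" using R2 by (intro mult_right_mono power_mono) auto
      finally show "\<bar>(real k)^2 * R2^k / R2^2\<bar> \<le> 1 * (real k + 1)^2 * R2^k" using R2 by simp
    qed (use R2 in auto)
    then show ?thesis unfolding CP_def using R2 B1.N_nonneg[OF b1]
      by (intro suminf_nonneg) auto
  qed
  have CQ0: "0 \<le> CQ"
  proof -
    have i1: "inverse R1 < 1" "0 < inverse R1" using R1 by (auto simp: inverse_less_1_iff)
    have "summable (\<lambda>k. ((real (Suc k))^2 + real (Suc k)) * inverse R1^(k+3) * N0 (b (- int (Suc k))))"
    proof (rule sumQ[where \<rho>="inverse R1" and C=2])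
      fix k
      have a: "inverse R1^(k+3) \<le> inverse R1 ^ k" using i1 by (intro power_decreasing) auto
      have b: "(real (Suc k))^2 + real (Suc k) \<le> 2 * (real k + 1)^2"
        by (simp add: power2_eq_square algebra_simps)
      have "((real (Suc k))^2 + real (Suc k)) * inverse R1^(k+3) \<le> (2 * (real k + 1)^2) * inverse R1 ^ k"
        using a b i1 by (intro mult_mono) auto
      then show "\<bar>((real (Suc k))^2 + real (Suc k)) * inverse R1^(k+3)\<bar> \<le> 2 * (real k + 1)^2 * inverse R1 ^ k"
        using i1 by (simp del: of_nat_Suc)
    qed (use i1 in auto)
    then show ?thesis unfolding CQ_def using i1 B0.N_nonneg[OF b0]
      by (intro suminf_nonneg) (auto simp del: of_nat_Suc)
  qed
  show "\<exists>d\<in>sum_space B0 B1. \<forall>e>0. \<exists>r>0. \<forall>w\<in>annulus. w \<noteq> z \<and> cmod (w - z) < r \<longrightarrow>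
          sum_norm B0 N0 B1 N1 (scaleCx (inverse (w - z)) (FF w - FF z) - d) < e"
  proof (intro bexI allI impI)
    show "Q' z + P' z \<in> sum_space B0 B1" by (rule sum_space_in[OF Q'_in[OF R1 zR(1)] P'_in[OF R2(2,1) zR(2)]])
    fix e :: real assume e: "e > 0"
    define \<delta> where "\<delta> = min r (e / (CP + CQ + 1))"
    have d0: "0 < \<delta>" using r0 e CP0 CQ0 by (simp add: \<delta>_def)
    show "\<exists>r>0. \<forall>w\<in>annulus. w \<noteq> z \<and> cmod (w - z) < r \<longrightarrow>
          sum_norm B0 N0 B1 N1 (scaleCx (inverse (w - z)) (FF w - FF z) - (Q' z + P' z)) < e"
    proof (intro exI[of _ \<delta>] conjI d0 ballI impI)
      fix w assume w: "w \<in> annulus" and wz: "w \<noteq> z \<and> cmod (w - z) < \<delta>"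
      have w1: "1 < cmod w" and w2: "cmod w < exp 1" using w by (auto simp: annulus_def)
      have wd: "cmod (w - z) < r" using wz by (simp add: \<delta>_def)
      have t1: "cmod w - cmod z \<le> cmod (w - z)" by (rule norm_triangle_ineq2)
      have t2: "cmod z - cmod w \<le> cmod (w - z)" using norm_triangle_ineq2[of z w] by (simp add: norm_minus_commute)
      have wR: "R1 \<le> cmod w" "cmod w \<le> R2" using t1 t2 wd by (auto simp: R1_def R2_def)
      have QP: "Q w \<in> B0" "Q z \<in> B0" "P w \<in> B1" "P z \<in> B1"
        using Q_conv(1)[OF w1] Q_conv(1)[OF z1] P_conv(1)[OF w2] P_conv(1)[OF z2] by auto
      have Q'z: "Q' z \<in> B0" by (rule Q'_in[OF R1 zR(1)])
      have P'z: "P' z \<in> B1" by (rule P'_in[OF R2(2,1) zR(2)])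
      have dec: "scaleCx (inverse (w - z)) (FF w - FF z) - (Q' z + P' z)
          = (scaleCx (inverse (w - z)) (Q w - Q z) - Q' z) + (scaleCx (inverse (w - z)) (P w - P z) - P' z)"
        unfolding FF_def scaleCx_diff_right scaleCx_add_right by (simp add: algebra_simps)
      have "sum_norm B0 N0 B1 N1 (scaleCx (inverse (w - z)) (FF w - FF z) - (Q' z + P' z))
         \<le> N0 (scaleCx (inverse (w - z)) (Q w - Q z) - Q' z) + N1 (scaleCx (inverse (w - z)) (P w - P z) - P' z)"
        unfolding dec by (rule sum_norm_le)
          (use QP Q'z P'z in \<open>auto intro: B0.diff_in B1.diff_in B0.scale_in B1.scale_in\<close>)
      also have "\<dots> \<le> cmod (w - z) * CQ + cmod (w - z) * CP"
        unfolding CQ_def CP_def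
        using Qpart[OF R1 wR(1) zR(1)] Ppart[OF R2(2,1) wR(2) zR(2)] wz by (intro add_mono) auto
      also have "\<dots> = cmod (w - z) * (CP + CQ)" by (simp add: algebra_simps)
      also have "\<dots> \<le> \<delta> * (CP + CQ)" using wz CP0 CQ0 by (intro mult_right_mono) auto
      also have "\<dots> \<le> e / (CP + CQ + 1) * (CP + CQ)" using CP0 CQ0 by (intro mult_right_mono) (auto simp: \<delta>_def)
      also have "\<dots> < e"
      proof -
        have "e * (CP + CQ) < e * (CP + CQ + 1)" using e by simp
        then show ?thesis using CP0 CQ0 by (simp add: field_simps)
      qed
      finally show "sum_norm B0 N0 B1 N1 (scaleCx (inverse (w - z)) (FF w - FF z) - (Q' z + P' z)) < e" .
    qed
  qed
qed

end


context cpl begin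

lemma sum_norm_ge:
  assumes c0: "\<forall>x\<in>B0. norm x \<le> c0 * N0 x" and c1: "\<forall>x\<in>B1. norm x \<le> c1 * N1 x"
    and v: "v \<in> sum_space B0 B1"
  shows "norm v \<le> max (max c0 c1) 1 * sum_norm B0 N0 B1 N1 v"
proof -
  define C where "C = max (max c0 c1) 1"
  have C: "0 < C" "c0 \<le> C" "c1 \<le> C" by (auto simp: C_def)
  have "norm v / C \<le> sum_norm B0 N0 B1 N1 v"
    unfolding sum_norm_def
  proof (rule cInf_greatest)
    show "{N0 a + N1 b |a b. a \<in> B0 \<and> b \<in> B1 \<and> v = a + b} \<noteq> {}"
      using v unfolding sum_space_def by blast
    fix s assume "s \<in> {N0 a + N1 b |a b. a \<in> B0 \<and> b \<in> B1 \<and> v = a + b}"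
    then obtain a c where ac: "a \<in> B0" "c \<in> B1" "v = a + c" "s = N0 a + N1 c" by blast
    have "norm v \<le> norm a + norm c" using ac by (simp add: norm_triangle_ineq)
    also have "\<dots> \<le> c0 * N0 a + c1 * N1 c" using c0 c1 ac by (intro add_mono) auto
    also have "\<dots> \<le> C * N0 a + C * N1 c"
      using C B0.N_nonneg[OF ac(1)] B1.N_nonneg[OF ac(2)] by (intro add_mono mult_right_mono) auto
    finally show "norm v / C \<le> s" using C ac by (simp add: divide_le_eq algebra_simps)
  qed
  then show ?thesis using C unfolding C_def[symmetric] by (simp add: divide_le_eq mult.commute)
qed

lemma zsum_unique:
  assumes c0: "\<forall>x\<in>B0. norm x \<le> c0 * N0 x" and c1: "\<forall>x\<in>B1. norm x \<le> c1 * N1 x"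
    and u: "\<And>n. u n \<in> B0"
    and x: "zsum_conv B0 N0 B1 N1 u x" and y: "zsum_conv B0 N0 B1 N1 u y"
  shows "x = y"
proof (rule ccontr)
  assume ne: "x \<noteq> y"
  define C where "C = max (max c0 c1) 1"
  have C: "0 < C" by (auto simp: C_def)
  define e where "e = norm (x - y) / (4 * C)"
  have e: "e > 0" using ne C by (simp add: e_def)
  obtain Kx where Kx: "\<forall>M\<ge>Kx. \<forall>N\<ge>Kx. sum_norm B0 N0 B1 N1 (x - (\<Sum>n\<in>{- int N..int M}. u n)) < e"
    using x e unfolding zsum_conv_def by blast
  obtain Ky where Ky: "\<forall>M\<ge>Ky. \<forall>N\<ge>Ky. sum_norm B0 N0 B1 N1 (y - (\<Sum>n\<in>{- int N..int M}. u n)) < e"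
    using y e unfolding zsum_conv_def by blast
  define K where "K = max Kx Ky"
  define S where "S = (\<Sum>n\<in>{- int K..int K}. u n)"
  have SB: "S \<in> B0" unfolding S_def by (intro B0.sum_in u)
  have insp: "w - S \<in> sum_space B0 B1" if wsp: "w \<in> sum_space B0 B1" for w
  proof -
    obtain a c where "a \<in> B0" "c \<in> B1" "w = a + c" using wsp unfolding sum_space_def by blast
    then have "w - S = (a - S) + c" "a - S \<in> B0" using SB by (auto intro: B0.diff_in simp: algebra_simps)
    then show ?thesis using \<open>c \<in> B1\<close> sum_space_in by metis
  qed
  have xs: "x \<in> sum_space B0 B1" "y \<in> sum_space B0 B1" using x y unfolding zsum_conv_def by auto
  have "norm (x - y) \<le> norm (x - S) + norm (y - S)"
    using norm_triangle_ineq4[of "x - S" "y - S"] by simp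
  also have "\<dots> \<le> C * sum_norm B0 N0 B1 N1 (x - S) + C * sum_norm B0 N0 B1 N1 (y - S)"
    unfolding C_def using sum_norm_ge[OF c0 c1 insp[OF xs(1)]] sum_norm_ge[OF c0 c1 insp[OF xs(2)]]
    by (intro add_mono)
  also have "\<dots> < C * e + C * e"
    using Kx Ky C unfolding S_def K_def by (intro add_strict_mono mult_strict_left_mono) auto
  also have "\<dots> = norm (x - y) / 2" using C by (simp add: e_def field_simps)
  finally show False using ne by simp
qed

end



lemma rot_J:
  fixes X0 X1 :: "'v::cnormed pseudo"
  assumes bs0: "banach_sp B0 N0" and bs1: "banach_sp B1 N1"
    and r0: "rotation_invariant X0" and r1: "rotation_invariant X1"
    and b: "b \<in> J_space X0 X1 B0 N0 B1 N1"
  shows "(\<lambda>n. scaleCx (cis (of_int n * \<tau>)) (b n)) \<in> J_space X0 X1 B0 N0 B1 N1 \<and>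
         J_norm X0 X1 B0 N0 B1 N1 (\<lambda>n. scaleCx (cis (of_int n * \<tau>)) (b n)) = J_norm X0 X1 B0 N0 B1 N1 b"
proof -
  interpret B0: bsp B0 N0 by (rule bsp.intro[OF bs0])
  interpret B1: bsp B1 N1 by (rule bsp.intro[OF bs1])
  have bJ: "\<And>n. b n \<in> B0" "\<And>n. b n \<in> B1" "b \<in> fst (X0 (B0, N0))"
    "(\<lambda>n. scaleCx (exp (of_int n)) (b n)) \<in> fst (X1 (B1, N1))"
    using b unfolding J_space_def by auto
  have R0: "(\<lambda>n. scaleCx (cis (of_int n * \<tau>)) (b n)) \<in> fst (X0 (B0, N0))"
    "snd (X0 (B0, N0)) (\<lambda>n. scaleCx (cis (of_int n * \<tau>)) (b n)) = snd (X0 (B0, N0)) b"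
    using r0 bs0 bJ(3) unfolding rotation_invariant_def by blast+
  define eb where "eb = (\<lambda>n. scaleCx (exp (of_int n)) (b n))"
  have e: "(\<lambda>n. scaleCx (exp (of_int n)) (scaleCx (cis (of_int n * \<tau>)) (b n)))
      = (\<lambda>n. scaleCx (cis (of_int n * \<tau>)) (eb n))"
    unfolding eb_def scaleCx_scaleCx by (simp add: mult.commute)
  have R1: "(\<lambda>n. scaleCx (cis (of_int n * \<tau>)) (eb n)) \<in> fst (X1 (B1, N1))"
    "snd (X1 (B1, N1)) (\<lambda>n. scaleCx (cis (of_int n * \<tau>)) (eb n)) = snd (X1 (B1, N1)) eb"
    using r1 bs1 bJ(4) unfolding rotation_invariant_def eb_def[symmetric] by blast+
  note e' = e[unfolded eb_def]
  show ?thesis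
    unfolding J_space_def J_norm_def mem_Collect_eq e'
    using R0 R1[unfolded eb_def] bJ B0.scale_in B1.scale_in by auto
qed



theorem lemma2p1:
  fixes X0 X1 :: "'v::cnormed pseudo"
    and B0 B1 :: "'v set" and N0 N1 :: "'v \<Rightarrow> real"
  assumes "pseudolattice X0" and "pseudolattice X1" and "rot_inv_couple X0 X1"
    and "banach_couple B0 N0 B1 N1"
  shows "\<forall>s\<in>annulus.
     (\<forall>f\<in>F_space X0 X1 B0 N0 B1 N1.
        f s \<in> Bs_space X0 X1 B0 N0 B1 N1 (complex_of_real (cmod s))) \<and>
     (\<forall>x\<in>Bs_space X0 X1 B0 N0 B1 N1 (complex_of_real (cmod s)).
        \<exists>f\<in>F_space X0 X1 B0 N0 B1 N1. f s = x) \<and>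
     Bs_space X0 X1 B0 N0 B1 N1 s = Bs_space X0 X1 B0 N0 B1 N1 (complex_of_real (cmod s)) \<and>
     (\<forall>x\<in>Bs_space X0 X1 B0 N0 B1 N1 s.
        Bs_norm X0 X1 B0 N0 B1 N1 s x = Bs_norm X0 X1 B0 N0 B1 N1 (complex_of_real (cmod s)) x)"
proof
  fix s assume s: "s \<in> annulus"
  obtain c0 c1 where bs0: "banach_sp B0 N0" and bs1: "banach_sp B1 N1"
    and c0: "\<forall>x\<in>B0. norm x \<le> c0 * N0 x" and c1: "\<forall>x\<in>B1. norm x \<le> c1 * N1 x"
    using assms(4) unfolding banach_couple_def by blast
  interpret cpl B0 N0 B1 N1 unfolding cpl_def using bsp.intro[OF bs0] bsp.intro[OF bs1] by simp
  have r0: "rotation_invariant X0" and r1: "rotation_invariant X1"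
    using assms(3) unfolding rot_inv_couple_def by auto
  define J where "J = J_space X0 X1 B0 N0 B1 N1"
  define a where "a = complex_of_real (cmod s)"
  define \<theta> where "\<theta> = Arg s"
  have sdec: "s = a * cis \<theta>" unfolding a_def \<theta>_def using rcis_cmod_Arg[of s] by (simp add: rcis_def)
  have id1: "a powi n * cis (of_int n * \<theta>) = s powi n" for n
    by (subst sdec) (simp add: power_int_mult_distrib cis_power_int)
  have id2: "s powi n * cis (- (of_int n * \<theta>)) = a powi n" for n
  proof -
    have "s powi n * cis (- (of_int n * \<theta>)) = a powi n * (cis (of_int n * \<theta>) * cis (- (of_int n * \<theta>)))"
      by (simp flip: id1)
    also have "\<dots> = a powi n" by (simp add: cis_mult)
    finally show ?thesis .
  qed
  have rot: "(\<lambda>n. scaleCx (cis (of_int n * \<tau>)) (b n)) \<in> J \<and>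
         J_norm X0 X1 B0 N0 B1 N1 (\<lambda>n. scaleCx (cis (of_int n * \<tau>)) (b n)) = J_norm X0 X1 B0 N0 B1 N1 b"
    if "b \<in> J" for b \<tau> using rot_J[OF bs0 bs1 r0 r1] that unfolding J_def by blast
  have eqA: "(\<lambda>n. scaleCx (a powi n) (scaleCx (cis (of_int n * \<theta>)) (b n))) = (\<lambda>n. scaleCx (s powi n) (b n))" for b
    by (simp add: scaleCx_scaleCx id1)
  have eqB: "(\<lambda>n. scaleCx (s powi n) (scaleCx (cis (- (of_int n * \<theta>))) (b n))) = (\<lambda>n. scaleCx (a powi n) (b n))" for b
    by (simp only: scaleCx_scaleCx id2)
  define T where "T t x = {J_norm X0 X1 B0 N0 B1 N1 b | b. b \<in> J \<and>
            zsum_conv B0 N0 B1 N1 (\<lambda>n. scaleCx (t powi n) (b n)) x}" for t x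
  have Teq: "T s x = T a x" for x
  proof
    show "T s x \<subseteq> T a x"
    proof
      fix v assume "v \<in> T s x"
      then obtain b where b: "v = J_norm X0 X1 B0 N0 B1 N1 b" "b \<in> J"
        "zsum_conv B0 N0 B1 N1 (\<lambda>n. scaleCx (s powi n) (b n)) x" unfolding T_def by blast
      show "v \<in> T a x" unfolding T_def
        using rot[OF b(2), of \<theta>] b by (intro CollectI exI[of _ "\<lambda>n. scaleCx (cis (of_int n * \<theta>)) (b n)"]) (simp add: eqA)
    qed
    show "T a x \<subseteq> T s x"
    proof
      fix v assume "v \<in> T a x"
      then obtain b where b: "v = J_norm X0 X1 B0 N0 B1 N1 b" "b \<in> J"
        "zsum_conv B0 N0 B1 N1 (\<lambda>n. scaleCx (a powi n) (b n)) x" unfolding T_def by blast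
      show "v \<in> T s x" unfolding T_def
        using rot[OF b(2), of "- \<theta>"] b by (intro CollectI exI[of _ "\<lambda>n. scaleCx (cis (- (of_int n * \<theta>))) (b n)"]) (simp add: eqB)
    qed
  qed
  have Beq: "Bs_space X0 X1 B0 N0 B1 N1 s = Bs_space X0 X1 B0 N0 B1 N1 a"
  proof -
    have "x \<in> Bs_space X0 X1 B0 N0 B1 N1 s \<longleftrightarrow> T s x \<noteq> {}" for x
      unfolding Bs_space_def T_def J_def by blast
    moreover have "x \<in> Bs_space X0 X1 B0 N0 B1 N1 a \<longleftrightarrow> T a x \<noteq> {}" for x
      unfolding Bs_space_def T_def J_def by blast
    ultimately show ?thesis using Teq by blast
  qed
  have Neq: "Bs_norm X0 X1 B0 N0 B1 N1 s x = Bs_norm X0 X1 B0 N0 B1 N1 a x" for x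
    using Teq[of x] unfolding Bs_norm_def T_def J_def by simp
  have part1: "f s \<in> Bs_space X0 X1 B0 N0 B1 N1 a" if f: "f \<in> F_space X0 X1 B0 N0 B1 N1" for f
  proof -
    obtain b where "b \<in> J_space X0 X1 B0 N0 B1 N1" "zsum_conv B0 N0 B1 N1 (\<lambda>n. scaleCx (s powi n) (b n)) (f s)"
      using f s unfolding F_space_def by blast
    then have "f s \<in> Bs_space X0 X1 B0 N0 B1 N1 s" unfolding Bs_space_def by blast
    then show ?thesis using Beq by simp
  qed
  have part2: "\<exists>f\<in>F_space X0 X1 B0 N0 B1 N1. f s = x" if x: "x \<in> Bs_space X0 X1 B0 N0 B1 N1 a" for x
  proof -
    have "x \<in> Bs_space X0 X1 B0 N0 B1 N1 s" using x Beq by simp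
    then obtain b where bJ: "b \<in> J_space X0 X1 B0 N0 B1 N1"
      and bx: "zsum_conv B0 N0 B1 N1 (\<lambda>n. scaleCx (s powi n) (b n)) x"
      unfolding Bs_space_def by blast
    have bB: "\<And>n. b n \<in> B0" "\<And>n. b n \<in> B1" "b \<in> fst (X0 (B0, N0))"
      "(\<lambda>n. scaleCx (exp (of_int n)) (b n)) \<in> fst (X1 (B1, N1))"
      using bJ unfolding J_space_def by auto
    define K0 where "K0 = snd (X0 (B0, N0)) b"
    define K1 where "K1 = snd (X1 (B1, N1)) (\<lambda>n. scaleCx (exp (of_int n)) (b n))"
    have pl0: "\<forall>m. N0 (b m) \<le> K0"
      using assms(1) bs0 bB(3) unfolding pseudolattice_def K0_def by blast
    have plX1: "\<forall>bb\<in>fst (X1 (B1, N1)). \<forall>m. bb m \<in> B1 \<and> N1 (bb m) \<le> snd (X1 (B1, N1)) bb"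
      using assms(2) bs1 unfolding pseudolattice_def by blast
    have pl1: "\<forall>m. N1 (scaleCx (exp (of_int m)) (b m)) \<le> K1"
      using bspec[OF plX1 bB(4)] unfolding K1_def by simp
    have k1: "N1 (b (int k)) \<le> K1 * inverse (exp 1) ^ k" for k
    proof -
      have ce: "cmod (exp (of_int (int k) :: complex)) = exp 1 ^ k"
        using exp_of_nat_mult[of k "1::real"] by simp
      have "exp 1 ^ k * N1 (b (int k)) \<le> K1"
        using pl1[rule_format, of "int k"] B1.N_scale[OF bB(2), of "exp (of_int (int k))"] ce by simp
      then show ?thesis by (simp add: field_simps power_inverse)
    qed
    interpret Lx: lau B0 N0 B1 N1 b K0 K1
      unfolding lau_def lau_axioms_def using pl0 k1 bB(1,2) cpl_axioms by blast
    have F: "Lx.FF \<in> F_space X0 X1 B0 N0 B1 N1"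
      unfolding F_space_def using Lx.FF_analytic Lx.FF_zsum bJ by blast
    have "Lx.FF s = x"
      by (rule zsum_unique[OF c0 c1 _ Lx.FF_zsum[OF s] bx]) (intro B0.scale_in bB(1))
    then show ?thesis using F by blast
  qed
  show "(\<forall>f\<in>F_space X0 X1 B0 N0 B1 N1.
        f s \<in> Bs_space X0 X1 B0 N0 B1 N1 (complex_of_real (cmod s))) \<and>
     (\<forall>x\<in>Bs_space X0 X1 B0 N0 B1 N1 (complex_of_real (cmod s)).
        \<exists>f\<in>F_space X0 X1 B0 N0 B1 N1. f s = x) \<and>
     Bs_space X0 X1 B0 N0 B1 N1 s = Bs_space X0 X1 B0 N0 B1 N1 (complex_of_real (cmod s)) \<and>
     (\<forall>x\<in>Bs_space X0 X1 B0 N0 B1 N1 s.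
        Bs_norm X0 X1 B0 N0 B1 N1 s x = Bs_norm X0 X1 B0 N0 B1 N1 (complex_of_real (cmod s)) x)"
    using part1 part2 Beq Neq unfolding a_def by blast
qed


end
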